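(* Let $X$ be a finite connected simplicial complex, $\delta$ a cellular perversity, $\mathcal T(X,\delta)$ the topology with base $\mathcal B(X,\delta)=\{U(\Delta,\delta)\}$, and $\operatorname{Pre}\mathcal B(X,\delta)$ the category of presheaves on $\mathcal B(X,\delta)$ ordered by inclusion. Let $\Phi^+:\operatorname{Pre}\mathcal B(X,\delta)\to\mathcal{SH}(\mathcal T(X,\delta))$ be $\mathbf S\mapsto\tilde{\mathbf S}$ (with $\tilde S(W)=\varprojlim_{U(\Delta,\delta)\subseteq W}S(U(\Delta,\delta))$), and $\Phi^-:\mathcal{SH}(\mathcal T(X,\delta))\to\operatorname{Pre}\mathcal B(X,\delta)$ the restriction of a sheaf to the open sets $U(\Delta,\delta)$. Then $\Phi^+$ and $\Phi^-$ are quasi-inverse equivalences of categories.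
   Context: Simplices are open; $\Delta\leftrightarrow\Delta'$ means one is a face of the other. Cellular perversity: $\delta:\mathbb Z_{\ge0}\to\mathbb Z$, $\delta(0)=0$, bijective from each $\{0,\dots,k\}$ onto an interval $\{a,\dots,a+k\}$, $a\le0$; $\delta(\Delta)=\delta(\dim\Delta)$. Order: $\Delta\ge\Delta'$ iff there is a chain $\Delta=\Delta_0,\dots,\Delta_r=\Delta'$ ($r\ge0$) with $\Delta_i\leftrightarrow\Delta_{i+1}$, $\delta(\Delta_i)=\delta(\Delta_{i+1})+1$. Perverse star $U(\Delta,\delta)=\bigsqcup_{\Delta'\le\Delta}\Delta'$. $\mathcal{SH}(\mathcal T(X,\delta))$: sheaves of $\mathbb F$-vector spaces on $(X,\mathcal T(X,\delta))$. *)

theory Defs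
  imports "HOL-Analysis.Analysis" "HOL-Algebra.Module"
begin

definition simplicial_complex :: "'v set set \<Rightarrow> bool" where
  "simplicial_complex C \<longleftrightarrow> finite C \<and> (\<forall>S\<in>C. finite S \<and> S \<noteq> {}) \<and>
     (\<forall>S\<in>C. \<forall>R. R \<subseteq> S \<and> R \<noteq> {} \<longrightarrow> R \<in> C)"

definition open_simplex :: "'v set \<Rightarrow> ('v \<Rightarrow> real) set" where
  "open_simplex S = {f. (\<forall>v\<in>S. 0 < f v) \<and> (\<forall>v. v \<notin> S \<longrightarrow> f v = 0) \<and> sum f S = 1}"

definition realization :: "'v set set \<Rightarrow> ('v \<Rightarrow> real) set" where
  "realization C = (\<Union>S\<in>C. open_simplex S)"

definition sdim :: "'v set \<Rightarrow> nat" where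
  "sdim S = card S - 1"

definition cellular_perversity :: "(nat \<Rightarrow> int) \<Rightarrow> bool" where
  "cellular_perversity d \<longleftrightarrow> d 0 = 0 \<and>
     (\<forall>k. \<exists>a \<le> 0. bij_betw d {0..k} {a..a + int k})"

definition perv_step :: "'v set set \<Rightarrow> (nat \<Rightarrow> int) \<Rightarrow> 'v set \<Rightarrow> 'v set \<Rightarrow> bool" where
  "perv_step C d S S' \<longleftrightarrow> S \<in> C \<and> S' \<in> C \<and> (S \<subseteq> S' \<or> S' \<subseteq> S) \<and>
     d (sdim S) = d (sdim S') + 1"

definition perv_ge :: "'v set set \<Rightarrow> (nat \<Rightarrow> int) \<Rightarrow> 'v set \<Rightarrow> 'v set \<Rightarrow> bool" where
  "perv_ge C d S S' \<longleftrightarrow> (perv_step C d)\<^sup>*\<^sup>* S S'"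

definition perv_star :: "'v set set \<Rightarrow> (nat \<Rightarrow> int) \<Rightarrow> 'v set \<Rightarrow> ('v \<Rightarrow> real) set" where
  "perv_star C d S = \<Union>{open_simplex S' | S'. S' \<in> C \<and> perv_ge C d S S'}"

definition perv_base :: "'v set set \<Rightarrow> (nat \<Rightarrow> int) \<Rightarrow> ('v \<Rightarrow> real) set set" where
  "perv_base C d = perv_star C d ` C"

definition perv_topology :: "'v set set \<Rightarrow> (nat \<Rightarrow> int) \<Rightarrow> ('v \<Rightarrow> real) topology" where
  "perv_topology C d = topology (\<lambda>W. \<exists>F \<subseteq> perv_base C d. W = \<Union>F)"

text \<open>Vector spaces over a field Fld are HOL-Algebra modules over Fld.\<close>
definition linear_map :: "'k ring \<Rightarrow> ('k,'a) module \<Rightarrow> ('k,'b) module \<Rightarrow> ('a \<Rightarrow> 'b) \<Rightarrow> bool" where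
  "linear_map Fld V W f \<longleftrightarrow> f \<in> carrier V \<rightarrow> carrier W \<and>
     (\<forall>x\<in>carrier V. \<forall>y\<in>carrier V. f (add V x y) = add W (f x) (f y)) \<and>
     (\<forall>a\<in>carrier Fld. \<forall>x\<in>carrier V. f (smult V a x) = smult W a (f x))"

text \<open>A presheaf on a family Os of sets (ordered by inclusion): objects and restriction maps.\<close>
type_synonym ('k,'a,'x) presheaf = "('x set \<Rightarrow> ('k,'a) module) \<times> ('x set \<Rightarrow> 'x set \<Rightarrow> 'a \<Rightarrow> 'a)"

definition presheaf_on :: "'k ring \<Rightarrow> 'x set set \<Rightarrow> ('k,'a,'x) presheaf \<Rightarrow> bool" where
  "presheaf_on Fld Os P \<longleftrightarrow>
     (\<forall>U\<in>Os. module Fld (fst P U)) \<and>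
     (\<forall>U\<in>Os. \<forall>U'\<in>Os. U' \<subseteq> U \<longrightarrow> linear_map Fld (fst P U) (fst P U') (snd P U U')) \<and>
     (\<forall>U\<in>Os. \<forall>x\<in>carrier (fst P U). snd P U U x = x) \<and>
     (\<forall>U\<in>Os. \<forall>U'\<in>Os. \<forall>U''\<in>Os. U'' \<subseteq> U' \<and> U' \<subseteq> U \<longrightarrow>
        (\<forall>x\<in>carrier (fst P U). snd P U' U'' (snd P U U' x) = snd P U U'' x))"

definition presheaf_mor :: "'k ring \<Rightarrow> 'x set set \<Rightarrow> ('k,'a,'x) presheaf \<Rightarrow> ('k,'b,'x) presheaf
    \<Rightarrow> ('x set \<Rightarrow> 'a \<Rightarrow> 'b) \<Rightarrow> bool" where
  "presheaf_mor Fld Os P Q phi \<longleftrightarrow>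
     (\<forall>U\<in>Os. linear_map Fld (fst P U) (fst Q U) (phi U)) \<and>
     (\<forall>U\<in>Os. \<forall>U'\<in>Os. U' \<subseteq> U \<longrightarrow>
        (\<forall>x\<in>carrier (fst P U). phi U' (snd P U U' x) = snd Q U U' (phi U x)))"

definition id_mor :: "'x set \<Rightarrow> 'a \<Rightarrow> 'a" where
  "id_mor = (\<lambda>U x. x)"

definition comp_mor :: "('x set \<Rightarrow> 'b \<Rightarrow> 'c) \<Rightarrow> ('x set \<Rightarrow> 'a \<Rightarrow> 'b) \<Rightarrow> ('x set \<Rightarrow> 'a \<Rightarrow> 'c)" where
  "comp_mor psi phi = (\<lambda>U x. psi U (phi U x))"

definition mor_eq :: "'x set set \<Rightarrow> ('k,'a,'x) presheaf \<Rightarrow> ('x set \<Rightarrow> 'a \<Rightarrow> 'b)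
    \<Rightarrow> ('x set \<Rightarrow> 'a \<Rightarrow> 'b) \<Rightarrow> bool" where
  "mor_eq Os P phi psi \<longleftrightarrow> (\<forall>U\<in>Os. \<forall>x\<in>carrier (fst P U). phi U x = psi U x)"

definition presheaf_iso :: "'k ring \<Rightarrow> 'x set set \<Rightarrow> ('k,'a,'x) presheaf \<Rightarrow> ('k,'b,'x) presheaf
    \<Rightarrow> ('x set \<Rightarrow> 'a \<Rightarrow> 'b) \<Rightarrow> bool" where
  "presheaf_iso Fld Os P Q phi \<longleftrightarrow> presheaf_mor Fld Os P Q phi \<and>
     (\<exists>psi. presheaf_mor Fld Os Q P psi \<and>
        mor_eq Os P (comp_mor psi phi) id_mor \<and> mor_eq Os Q (comp_mor phi psi) id_mor)"

definition opens :: "'x topology \<Rightarrow> 'x set set" where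
  "opens T = {W. openin T W}"

definition sheaf_on :: "'k ring \<Rightarrow> 'x topology \<Rightarrow> ('k,'a,'x) presheaf \<Rightarrow> bool" where
  "sheaf_on Fld T F \<longleftrightarrow> presheaf_on Fld (opens T) F \<and>
     (\<forall>W \<U>. openin T W \<and> (\<forall>U\<in>\<U>. openin T U) \<and> \<Union>\<U> = W \<longrightarrow>
        (\<forall>s\<in>carrier (fst F W). \<forall>t\<in>carrier (fst F W).
            (\<forall>U\<in>\<U>. snd F W U s = snd F W U t) \<longrightarrow> s = t) \<and>
        (\<forall>\<sigma>. (\<forall>U\<in>\<U>. \<sigma> U \<in> carrier (fst F U)) \<and>
              (\<forall>U\<in>\<U>. \<forall>U'\<in>\<U>. snd F U (U \<inter> U') (\<sigma> U) = snd F U' (U \<inter> U') (\<sigma> U')) \<longrightarrow>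
              (\<exists>s\<in>carrier (fst F W). \<forall>U\<in>\<U>. snd F W U s = \<sigma> U)))"

text \<open>Phi+: sections of the sheaf associated to a presheaf P on the base B over W
are the compatible families (the inverse limit over basic sets contained in W).\<close>
definition tilde_carrier :: "'x set set \<Rightarrow> ('k,'a,'x) presheaf \<Rightarrow> 'x set \<Rightarrow> ('x set \<Rightarrow> 'a) set" where
  "tilde_carrier B P W = {s.
     (\<forall>U\<in>B. U \<subseteq> W \<longrightarrow> s U \<in> carrier (fst P U)) \<and>
     (\<forall>U\<in>B. \<forall>U'\<in>B. U' \<subseteq> U \<and> U \<subseteq> W \<longrightarrow> snd P U U' (s U) = s U') \<and>
     (\<forall>U. \<not> (U \<in> B \<and> U \<subseteq> W) \<longrightarrow> s U = undefined)}"

definition tilde_module :: "'x set set \<Rightarrow> ('k,'a,'x) presheaf \<Rightarrow> 'x set \<Rightarrow> ('k, 'x set \<Rightarrow> 'a) module" where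
  "tilde_module B P W =
     \<lparr>carrier = tilde_carrier B P W, mult = undefined, one = undefined,
      zero = (\<lambda>U. if U \<in> B \<and> U \<subseteq> W then zero (fst P U) else undefined),
      add = (\<lambda>s t U. if U \<in> B \<and> U \<subseteq> W then add (fst P U) (s U) (t U) else undefined),
      smult = (\<lambda>a s U. if U \<in> B \<and> U \<subseteq> W then smult (fst P U) a (s U) else undefined)\<rparr>"

definition tilde_res :: "'x set set \<Rightarrow> 'x set \<Rightarrow> 'x set \<Rightarrow> ('x set \<Rightarrow> 'a) \<Rightarrow> ('x set \<Rightarrow> 'a)" where
  "tilde_res B W W' s = (\<lambda>U. if U \<in> B \<and> U \<subseteq> W' then s U else undefined)"

definition Phi_plus :: "'x set set \<Rightarrow> ('k,'a,'x) presheaf \<Rightarrow> ('k, 'x set \<Rightarrow> 'a, 'x) presheaf" where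
  "Phi_plus B P = (tilde_module B P, tilde_res B)"

definition Phi_plus_mor :: "'x set set \<Rightarrow> ('x set \<Rightarrow> 'a \<Rightarrow> 'b)
    \<Rightarrow> ('x set \<Rightarrow> ('x set \<Rightarrow> 'a) \<Rightarrow> ('x set \<Rightarrow> 'b))" where
  "Phi_plus_mor B phi = (\<lambda>W s U. if U \<in> B \<and> U \<subseteq> W then phi U (s U) else undefined)"

definition Phi_minus :: "'x set set \<Rightarrow> ('k,'a,'x) presheaf \<Rightarrow> ('k,'a,'x) presheaf" where
  "Phi_minus B F = ((\<lambda>U. if U \<in> B then fst F U else undefined),
                    (\<lambda>U U'. if U \<in> B \<and> U' \<in> B then snd F U U' else undefined))"

definition Phi_minus_mor :: "'x set set \<Rightarrow> ('x set \<Rightarrow> 'a \<Rightarrow> 'b) \<Rightarrow> ('x set \<Rightarrow> 'a \<Rightarrow> 'b)" where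
  "Phi_minus_mor B phi = (\<lambda>U. if U \<in> B then phi U else undefined)"

end

theory Submission
  imports Defs
begin


lemma ps_mod: "presheaf_on Fld B P \<Longrightarrow> U \<in> B \<Longrightarrow> module Fld (fst P U)"
  by (simp add: presheaf_on_def)

lemma ps_ag: "presheaf_on Fld B P \<Longrightarrow> U \<in> B \<Longrightarrow> abelian_group (fst P U)"
  using ps_mod module.axioms(2) by blast

lemma ps_lin: "presheaf_on Fld B P \<Longrightarrow> U \<in> B \<Longrightarrow> U' \<in> B \<Longrightarrow> U' \<subseteq> U \<Longrightarrow>
   linear_map Fld (fst P U) (fst P U') (snd P U U')"
  by (simp add: presheaf_on_def)

lemma ps_id: "presheaf_on Fld B P \<Longrightarrow> U \<in> B \<Longrightarrow> x \<in> carrier (fst P U) \<Longrightarrow> snd P U U x = x"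
  by (simp add: presheaf_on_def)

lemma ps_comp: "presheaf_on Fld B P \<Longrightarrow> U \<in> B \<Longrightarrow> U' \<in> B \<Longrightarrow> U'' \<in> B \<Longrightarrow> U'' \<subseteq> U' \<Longrightarrow> U' \<subseteq> U \<Longrightarrow>
   x \<in> carrier (fst P U) \<Longrightarrow> snd P U' U'' (snd P U U' x) = snd P U U'' x"
  unfolding presheaf_on_def by blast

lemma lin_closed: "linear_map Fld V W f \<Longrightarrow> x \<in> carrier V \<Longrightarrow> f x \<in> carrier W"
  by (auto simp: linear_map_def)
lemma lin_add: "linear_map Fld V W f \<Longrightarrow> x \<in> carrier V \<Longrightarrow> y \<in> carrier V \<Longrightarrow> f (add V x y) = add W (f x) (f y)"
  by (auto simp: linear_map_def)
lemma lin_smult: "linear_map Fld V W f \<Longrightarrow> a \<in> carrier Fld \<Longrightarrow> x \<in> carrier V \<Longrightarrow> f (smult V a x) = smult W a (f x)"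
  by (auto simp: linear_map_def)

lemma lin_zero:
  assumes "linear_map Fld V W f" "abelian_group V" "abelian_group W"
  shows "f (zero V) = zero W"
proof -
  interpret V: abelian_group V by fact
  interpret W: abelian_group W by fact
  have z: "f (zero V) \<in> carrier W" using lin_closed[OF assms(1)] by simp
  have "f (zero V) = add W (f (zero V)) (f (zero V))"
    using lin_add[OF assms(1), of "zero V" "zero V"] by simp
  then have "add W (f (zero V)) (f (zero V)) = add W (zero W) (f (zero V))" using z by simp
  then show ?thesis using W.add.right_cancel z by (metis W.zero_closed)
qed

lemma lin_neg:
  assumes "linear_map Fld V W f" "abelian_group V" "abelian_group W" "x \<in> carrier V"
  shows "f (a_inv V x) = a_inv W (f x)"
proof -
  interpret V: abelian_group V by fact
  interpret W: abelian_group W by fact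
  have c1: "f (a_inv V x) \<in> carrier W" "f x \<in> carrier W" using lin_closed[OF assms(1)] assms(4) by auto
  have "add W (f (a_inv V x)) (f x) = zero W"
    using lin_add[OF assms(1), of "a_inv V x" x] assms lin_zero[OF assms(1-3)] by (simp add: V.l_neg)
  then show ?thesis using c1 by (metis W.minus_equality)
qed

lemma lin_linear_zero: "presheaf_on Fld B P \<Longrightarrow> U \<in> B \<Longrightarrow> U' \<in> B \<Longrightarrow> U' \<subseteq> U \<Longrightarrow>
   snd P U U' (zero (fst P U)) = zero (fst P U')"
  by (meson lin_zero ps_ag ps_lin)

lemma tilde_module_is_module:
  assumes Fc: "cring Fld" and P: "presheaf_on Fld B P"
  shows "module Fld (tilde_module B P W)"
proof -
  let ?M = "tilde_module B P W"
  have ag: "\<And>U. U \<in> B \<Longrightarrow> abelian_group (fst P U)" using ps_ag[OF P] .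
  have am: "\<And>U. U \<in> B \<Longrightarrow> abelian_monoid (fst P U)" using ag abelian_group.axioms(1) by blast
  have md: "\<And>U. U \<in> B \<Longrightarrow> module Fld (fst P U)" using ps_mod[OF P] .
  have car: "carrier ?M = tilde_carrier B P W" by (simp add: tilde_module_def)
  have addM: "add ?M = (\<lambda>s t U. if U \<in> B \<and> U \<subseteq> W then add (fst P U) (s U) (t U) else undefined)"
    by (simp add: tilde_module_def)
  have zeroM: "zero ?M = (\<lambda>U. if U \<in> B \<and> U \<subseteq> W then zero (fst P U) else undefined)"
    by (simp add: tilde_module_def)
  have smM: "smult ?M = (\<lambda>a s U. if U \<in> B \<and> U \<subseteq> W then smult (fst P U) a (s U) else undefined)"
    by (simp add: tilde_module_def)
  have inC: "s \<in> carrier ?M \<longleftrightarrow> (\<forall>U\<in>B. U \<subseteq> W \<longrightarrow> s U \<in> carrier (fst P U)) \<and>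
     (\<forall>U\<in>B. \<forall>U'\<in>B. U' \<subseteq> U \<and> U \<subseteq> W \<longrightarrow> snd P U U' (s U) = s U') \<and>
     (\<forall>U. \<not> (U \<in> B \<and> U \<subseteq> W) \<longrightarrow> s U = undefined)" for s
    by (simp add: car tilde_carrier_def)
  have ext_eq: "s = t" if "\<And>U. U \<in> B \<Longrightarrow> U \<subseteq> W \<Longrightarrow> s U = t U"
    "\<And>U. \<not> (U \<in> B \<and> U \<subseteq> W) \<Longrightarrow> s U = t U" for s t :: "_ \<Rightarrow> _"
    using that by blast
  show ?thesis
  proof (rule moduleI[OF Fc])
    show "abelian_group ?M"
    proof (rule abelian_groupI)
      fix x y assume x: "x \<in> carrier ?M" and y: "y \<in> carrier ?M"
      show "add ?M x y \<in> carrier ?M"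
        unfolding inC addM using x y unfolding inC
        by (auto simp: lin_add[OF ps_lin[OF P]] intro: abelian_monoid.a_closed[OF am])
      show "add ?M x y = add ?M y x"
        unfolding addM using x y unfolding inC
        by (auto intro!: ext abelian_monoid.a_comm[OF am])
    next
      show "zero ?M \<in> carrier ?M" unfolding inC zeroM
        by (auto simp: lin_linear_zero[OF P] intro: abelian_monoid.zero_closed[OF am])
    next
      fix x y z assume x: "x \<in> carrier ?M" and y: "y \<in> carrier ?M" and z: "z \<in> carrier ?M"
      show "add ?M (add ?M x y) z = add ?M x (add ?M y z)"
        unfolding addM using x y z unfolding inC
        by (auto intro!: ext abelian_monoid.a_assoc[OF am])
    next
      fix x assume x: "x \<in> carrier ?M"
      show "add ?M (zero ?M) x = x"
        unfolding addM zeroM using x unfolding inC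
        by (auto intro!: ext abelian_monoid.l_zero[OF am])
      let ?y = "\<lambda>U. if U \<in> B \<and> U \<subseteq> W then a_inv (fst P U) (x U) else undefined"
      have "?y \<in> carrier ?M" using x unfolding inC
        by (auto simp: lin_neg[OF ps_lin[OF P] ag ag] intro: abelian_group.a_inv_closed[OF ag])
      moreover have "add ?M ?y x = zero ?M"
        unfolding addM zeroM using x unfolding inC
        by (auto intro!: ext abelian_group.l_neg[OF ag])
      ultimately show "\<exists>y\<in>carrier ?M. add ?M y x = zero ?M" by blast
    qed
  next
    fix a x assume a: "a \<in> carrier Fld" and x: "x \<in> carrier ?M"
    show "smult ?M a x \<in> carrier ?M"
      unfolding smM using x unfolding inC using a
      by (auto simp: lin_smult[OF ps_lin[OF P]] intro: module.smult_closed[OF md])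
  next
    fix x assume x: "x \<in> carrier ?M"
    show "smult ?M (one Fld) x = x"
      unfolding smM using x unfolding inC
      by (auto intro!: ext module.smult_one[OF md])
  next
    fix a b x assume a: "a \<in> carrier Fld" and b: "b \<in> carrier Fld" and x: "x \<in> carrier ?M"
    show "smult ?M (add Fld a b) x = add ?M (smult ?M a x) (smult ?M b x)"
      unfolding smM addM using x unfolding inC using a b
      by (auto intro!: ext module.smult_l_distr[OF md])
    show "smult ?M (mult Fld a b) x = smult ?M a (smult ?M b x)"
      unfolding smM using x unfolding inC using a b
      by (auto intro!: ext module.smult_assoc1[OF md])
  next
    fix a x y assume a: "a \<in> carrier Fld" and x: "x \<in> carrier ?M" and y: "y \<in> carrier ?M"
    show "smult ?M a (add ?M x y) = add ?M (smult ?M a x) (smult ?M a y)"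
      unfolding smM addM using x y unfolding inC using a
      by (auto intro!: ext module.smult_r_distr[OF md])
  qed
qed



lemma tilde_carrier_iff: "s \<in> carrier (tilde_module B P W) \<longleftrightarrow>
     (\<forall>U\<in>B. U \<subseteq> W \<longrightarrow> s U \<in> carrier (fst P U)) \<and>
     (\<forall>U\<in>B. \<forall>U'\<in>B. U' \<subseteq> U \<and> U \<subseteq> W \<longrightarrow> snd P U U' (s U) = s U') \<and>
     (\<forall>U. \<not> (U \<in> B \<and> U \<subseteq> W) \<longrightarrow> s U = undefined)"
  by (simp add: tilde_module_def tilde_carrier_def)

lemma tilde_add: "add (tilde_module B P W) = (\<lambda>s t U. if U \<in> B \<and> U \<subseteq> W then add (fst P U) (s U) (t U) else undefined)"
  by (simp add: tilde_module_def)
lemma tilde_smult: "smult (tilde_module B P W) = (\<lambda>a s U. if U \<in> B \<and> U \<subseteq> W then smult (fst P U) a (s U) else undefined)"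
  by (simp add: tilde_module_def)

lemma Phi_plus_fst: "fst (Phi_plus B P) = tilde_module B P" by (simp add: Phi_plus_def)
lemma Phi_plus_snd: "snd (Phi_plus B P) = tilde_res B" by (simp add: Phi_plus_def)

lemma tilde_res_closed:
  assumes "s \<in> carrier (tilde_module B P W)" "W' \<subseteq> W"
  shows "tilde_res B W W' s \<in> carrier (tilde_module B P W')"
  using assms unfolding tilde_carrier_iff tilde_res_def by auto

lemma tilde_res_id:
  assumes "s \<in> carrier (tilde_module B P W)"
  shows "tilde_res B W W s = s"
  using assms unfolding tilde_carrier_iff tilde_res_def by auto

lemma Phi_plus_presheaf:
  assumes Fc: "cring Fld" and P: "presheaf_on Fld B P"
  shows "presheaf_on Fld Os (Phi_plus B P)"
  unfolding presheaf_on_def Phi_plus_fst Phi_plus_snd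
proof (intro conjI ballI impI allI)
  fix U assume "U \<in> Os" show "module Fld (tilde_module B P U)"
    by (rule tilde_module_is_module[OF Fc P])
next
  fix U U' assume "U \<in> Os" "U' \<in> Os" and sub: "U' \<subseteq> U"
  have sub2: "\<And>V. V \<subseteq> U' \<Longrightarrow> V \<subseteq> U" using sub by blast
  show "linear_map Fld (tilde_module B P U) (tilde_module B P U') (tilde_res B U U')"
    unfolding linear_map_def
  proof (intro conjI ballI)
    show "tilde_res B U U' \<in> carrier (tilde_module B P U) \<rightarrow> carrier (tilde_module B P U')"
      using tilde_res_closed sub by blast
  next
    fix x y assume "x \<in> carrier (tilde_module B P U)" "y \<in> carrier (tilde_module B P U)"
    show "tilde_res B U U' (add (tilde_module B P U) x y) =
          add (tilde_module B P U') (tilde_res B U U' x) (tilde_res B U U' y)"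
      unfolding tilde_add tilde_res_def using sub2 by (auto intro!: ext)
  next
    fix a x assume "a \<in> carrier Fld" "x \<in> carrier (tilde_module B P U)"
    show "tilde_res B U U' (smult (tilde_module B P U) a x) =
          smult (tilde_module B P U') a (tilde_res B U U' x)"
      unfolding tilde_smult tilde_res_def using sub2 by (auto intro!: ext)
  qed
next
  fix U x assume "U \<in> Os" "x \<in> carrier (tilde_module B P U)"
  then show "tilde_res B U U x = x" by (simp add: tilde_res_id)
next
  fix U U' U'' x assume "U \<in> Os" "U' \<in> Os" "U'' \<in> Os" "U'' \<subseteq> U' \<and> U' \<subseteq> U"
    "x \<in> carrier (tilde_module B P U)"
  then have "\<And>V. V \<subseteq> U'' \<Longrightarrow> V \<subseteq> U' \<and> V \<subseteq> U" by blast
  then show "tilde_res B U' U'' (tilde_res B U U' x) = tilde_res B U U'' x"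
    unfolding tilde_res_def by (auto intro!: ext)
qed

definition good_base :: "'x set set \<Rightarrow> 'x topology \<Rightarrow> bool" where
  "good_base B T \<longleftrightarrow> (\<forall>W. openin T W \<longleftrightarrow> (\<exists>F\<subseteq>B. W = \<Union>F)) \<and>
     (\<forall>V\<in>B. \<forall>\<U>. (\<forall>U\<in>\<U>. openin T U) \<and> V \<subseteq> \<Union>\<U> \<longrightarrow> (\<exists>U\<in>\<U>. V \<subseteq> U))"

lemma gb_open:
  assumes gb: "good_base B T" and V: "V \<in> B" shows "openin T V"
proof -
  have "\<forall>W. openin T W \<longleftrightarrow> (\<exists>F\<subseteq>B. W = \<Union>F)" using gb unfolding good_base_def by (rule conjunct1)
  moreover have "\<exists>F\<subseteq>B. V = \<Union>F" using V by (intro exI[of _ "{V}"]) auto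
  ultimately show ?thesis by simp
qed

lemma gb_min:
  assumes gb: "good_base B T" and V: "V \<in> B" and o: "\<forall>U\<in>\<U>. openin T U" and c: "V \<subseteq> \<Union>\<U>"
  shows "\<exists>U\<in>\<U>. V \<subseteq> U"
proof -
  have "\<forall>V\<in>B. \<forall>\<U>. (\<forall>U\<in>\<U>. openin T U) \<and> V \<subseteq> \<Union>\<U> \<longrightarrow> (\<exists>U\<in>\<U>. V \<subseteq> U)"
    using gb unfolding good_base_def by (rule conjunct2)
  then show ?thesis using V o c by blast
qed

lemma gb_union:
  assumes gb: "good_base B T" and W: "openin T W" shows "W = \<Union>{V\<in>B. V \<subseteq> W}"
proof -
  have "\<forall>W. openin T W \<longleftrightarrow> (\<exists>F\<subseteq>B. W = \<Union>F)" using gb unfolding good_base_def by (rule conjunct1)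
  then have "\<exists>F\<subseteq>B. W = \<Union>F" using W by simp
  then obtain F where F: "F \<subseteq> B" "W = \<Union>F" by blast
  show ?thesis
  proof (rule equalityI)
    show "W \<subseteq> \<Union>{V\<in>B. V \<subseteq> W}"
    proof
      fix x assume "x \<in> W" then obtain V where "V \<in> F" "x \<in> V" using F by blast
      then show "x \<in> \<Union>{V\<in>B. V \<subseteq> W}" using F by blast
    qed
  qed blast
qed

lemma Phi_plus_sheaf:
  assumes Fc: "cring Fld" and P: "presheaf_on Fld B P" and gb: "good_base B T"
  shows "sheaf_on Fld T (Phi_plus B P)"
  unfolding sheaf_on_def
proof (intro conjI allI impI)
  show "presheaf_on Fld (opens T) (Phi_plus B P)" by (rule Phi_plus_presheaf[OF Fc P])
next
  fix W \<U> assume H: "openin T W \<and> (\<forall>U\<in>\<U>. openin T U) \<and> \<Union>\<U> = W"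
  then have Uo: "\<forall>U\<in>\<U>. openin T U" and UW: "\<Union>\<U> = W" by auto
  have cov: "\<exists>U\<in>\<U>. V \<subseteq> U" if "V \<in> B" "V \<subseteq> W" for V
    using gb_min[OF gb that(1) Uo] that UW by blast
  show "\<forall>s\<in>carrier (fst (Phi_plus B P) W). \<forall>t\<in>carrier (fst (Phi_plus B P) W).
            (\<forall>U\<in>\<U>. snd (Phi_plus B P) W U s = snd (Phi_plus B P) W U t) \<longrightarrow> s = t"
    unfolding Phi_plus_fst Phi_plus_snd
  proof (intro ballI impI)
    fix s t assume s: "s \<in> carrier (tilde_module B P W)" and t: "t \<in> carrier (tilde_module B P W)"
      and eq: "\<forall>U\<in>\<U>. tilde_res B W U s = tilde_res B W U t"
    show "s = t"
    proof
      fix V show "s V = t V"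
      proof (cases "V \<in> B \<and> V \<subseteq> W")
        case True
        then obtain U where "U \<in> \<U>" "V \<subseteq> U" using cov by blast
        then have "tilde_res B W U s V = tilde_res B W U t V" using eq by simp
        then show ?thesis using True \<open>V \<subseteq> U\<close> unfolding tilde_res_def by simp
      next
        case False then show ?thesis using s t unfolding tilde_carrier_iff by auto
      qed
    qed
  qed
next
  fix W \<U> \<sigma> assume H: "openin T W \<and> (\<forall>U\<in>\<U>. openin T U) \<and> \<Union>\<U> = W"
  then have Uo: "\<forall>U\<in>\<U>. openin T U" and UW: "\<Union>\<U> = W" by auto
  have cov: "\<exists>U\<in>\<U>. V \<subseteq> U" if "V \<in> B" "V \<subseteq> W" for V
    using gb_min[OF gb that(1) Uo] that UW by blast
  assume "(\<forall>U\<in>\<U>. \<sigma> U \<in> carrier (fst (Phi_plus B P) U)) \<and>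
       (\<forall>U\<in>\<U>. \<forall>U'\<in>\<U>. snd (Phi_plus B P) U (U \<inter> U') (\<sigma> U) = snd (Phi_plus B P) U' (U \<inter> U') (\<sigma> U'))"
    then have sc: "\<And>U. U \<in> \<U> \<Longrightarrow> \<sigma> U \<in> carrier (tilde_module B P U)"
      and comp: "\<And>U U'. U \<in> \<U> \<Longrightarrow> U' \<in> \<U> \<Longrightarrow> tilde_res B U (U \<inter> U') (\<sigma> U) = tilde_res B U' (U \<inter> U') (\<sigma> U')"
      unfolding Phi_plus_fst Phi_plus_snd by auto
    have wd: "\<sigma> U V = \<sigma> U' V" if "U \<in> \<U>" "U' \<in> \<U>" "V \<in> B" "V \<subseteq> U" "V \<subseteq> U'" for U U' V
    proof -
      have "tilde_res B U (U \<inter> U') (\<sigma> U) V = tilde_res B U' (U \<inter> U') (\<sigma> U') V" using comp that by simp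
      then show ?thesis using that unfolding tilde_res_def by simp
    qed
    define ch where "ch V = (SOME U. U \<in> \<U> \<and> V \<subseteq> U)" for V
    have ch: "ch V \<in> \<U> \<and> V \<subseteq> ch V" if "V \<in> B" "V \<subseteq> W" for V
      unfolding ch_def using cov[OF that] by (metis (mono_tags, lifting) someI_ex)
    define s where "s V = (if V \<in> B \<and> V \<subseteq> W then \<sigma> (ch V) V else undefined)" for V
    have sV: "s V = \<sigma> U V" if "U \<in> \<U>" "V \<in> B" "V \<subseteq> U" for U V
    proof -
      have "V \<subseteq> W" using that UW by blast
      then show ?thesis using wd[of "ch V" U V] ch[of V] that s_def by simp
    qed
    have sin: "s \<in> carrier (tilde_module B P W)"
      unfolding tilde_carrier_iff
    proof (intro conjI ballI allI impI)
      fix V assume "V \<in> B" "V \<subseteq> W"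
      then show "s V \<in> carrier (fst P V)" using ch sc[of "ch V"] unfolding s_def tilde_carrier_iff by auto
    next
      fix V V' assume V: "V \<in> B" "V' \<in> B" "V' \<subseteq> V \<and> V \<subseteq> W"
      then have c: "ch V \<in> \<U>" "V \<subseteq> ch V" using ch by auto
      have "s V = \<sigma> (ch V) V" "s V' = \<sigma> (ch V) V'" using sV[OF c(1)] c V by auto
      then show "snd P V V' (s V) = s V'" using sc[OF c(1)] c V unfolding tilde_carrier_iff by auto
    next
      fix V assume "\<not> (V \<in> B \<and> V \<subseteq> W)" then show "s V = undefined" by (auto simp add: s_def)
    qed
    have "\<forall>U\<in>\<U>. tilde_res B W U s = \<sigma> U"
    proof
      fix U assume U: "U \<in> \<U>"
      show "tilde_res B W U s = \<sigma> U"
      proof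
        fix V show "tilde_res B W U s V = \<sigma> U V"
          using sV[OF U] sc[OF U] unfolding tilde_res_def tilde_carrier_iff by auto
      qed
    qed
    then show "\<exists>s\<in>carrier (fst (Phi_plus B P) W). \<forall>U\<in>\<U>. snd (Phi_plus B P) W U s = \<sigma> U"
      using sin unfolding Phi_plus_fst Phi_plus_snd by blast
qed



lemma Phi_minus_fst: "U \<in> B \<Longrightarrow> fst (Phi_minus B F) U = fst F U" by (simp add: Phi_minus_def)
lemma Phi_minus_snd: "U \<in> B \<Longrightarrow> U' \<in> B \<Longrightarrow> snd (Phi_minus B F) U U' = snd F U U'" by (simp add: Phi_minus_def)
lemma Phi_minus_mor_app: "U \<in> B \<Longrightarrow> Phi_minus_mor B phi U = phi U" by (simp add: Phi_minus_mor_def)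

lemma mor_lin: "presheaf_mor Fld Os P Q phi \<Longrightarrow> U \<in> Os \<Longrightarrow> linear_map Fld (fst P U) (fst Q U) (phi U)"
  by (simp add: presheaf_mor_def)
lemma mor_nat: "presheaf_mor Fld Os P Q phi \<Longrightarrow> U \<in> Os \<Longrightarrow> U' \<in> Os \<Longrightarrow> U' \<subseteq> U \<Longrightarrow>
   x \<in> carrier (fst P U) \<Longrightarrow> phi U' (snd P U U' x) = snd Q U U' (phi U x)"
  by (simp add: presheaf_mor_def)

lemma Phi_plus_mor_closed:
  assumes P: "presheaf_on Fld B P" and Q: "presheaf_on Fld B Q" and phi: "presheaf_mor Fld B P Q phi"
    and s: "s \<in> carrier (tilde_module B P W)"
  shows "Phi_plus_mor B phi W s \<in> carrier (tilde_module B Q W)"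
  unfolding tilde_carrier_iff Phi_plus_mor_def
proof (intro conjI ballI allI impI)
  fix U assume "U \<in> B" "U \<subseteq> W"
  then show "(if U \<in> B \<and> U \<subseteq> W then phi U (s U) else undefined) \<in> carrier (fst Q U)"
    using s lin_closed[OF mor_lin[OF phi]] unfolding tilde_carrier_iff by auto
next
  fix U U' assume H: "U \<in> B" "U' \<in> B" "U' \<subseteq> U \<and> U \<subseteq> W"
  then have "s U \<in> carrier (fst P U)" "snd P U U' (s U) = s U'" using s unfolding tilde_carrier_iff by auto
  then show "snd Q U U' (if U \<in> B \<and> U \<subseteq> W then phi U (s U) else undefined) =
         (if U' \<in> B \<and> U' \<subseteq> W then phi U' (s U') else undefined)"
    using H mor_nat[OF phi, of U U' "s U"] by auto
qed auto

lemma Phi_plus_mor_mor: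
  assumes P: "presheaf_on Fld B P" and Q: "presheaf_on Fld B Q" and phi: "presheaf_mor Fld B P Q phi"
  shows "presheaf_mor Fld Os (Phi_plus B P) (Phi_plus B Q) (Phi_plus_mor B phi)"
  unfolding presheaf_mor_def Phi_plus_fst Phi_plus_snd
proof (intro conjI ballI impI)
  fix W assume "W \<in> Os"
  show "linear_map Fld (tilde_module B P W) (tilde_module B Q W) (Phi_plus_mor B phi W)"
    unfolding linear_map_def
  proof (intro conjI ballI)
    show "Phi_plus_mor B phi W \<in> carrier (tilde_module B P W) \<rightarrow> carrier (tilde_module B Q W)"
      using Phi_plus_mor_closed[OF P Q phi] by blast
  next
    fix x y assume x: "x \<in> carrier (tilde_module B P W)" and y: "y \<in> carrier (tilde_module B P W)"
    show "Phi_plus_mor B phi W (add (tilde_module B P W) x y) =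
       add (tilde_module B Q W) (Phi_plus_mor B phi W x) (Phi_plus_mor B phi W y)"
      unfolding tilde_add Phi_plus_mor_def using x y unfolding tilde_carrier_iff
      by (auto intro!: ext lin_add[OF mor_lin[OF phi]])
  next
    fix a x assume a: "a \<in> carrier Fld" and x: "x \<in> carrier (tilde_module B P W)"
    show "Phi_plus_mor B phi W (smult (tilde_module B P W) a x) =
       smult (tilde_module B Q W) a (Phi_plus_mor B phi W x)"
      unfolding tilde_smult Phi_plus_mor_def using x a unfolding tilde_carrier_iff
      by (auto intro!: ext lin_smult[OF mor_lin[OF phi]])
  qed
next
  fix W W' x assume "W \<in> Os" "W' \<in> Os" "W' \<subseteq> W" "x \<in> carrier (tilde_module B P W)"
  then have "\<And>V. V \<subseteq> W' \<Longrightarrow> V \<subseteq> W" by blast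
  then show "Phi_plus_mor B phi W' (tilde_res B W W' x) = tilde_res B W W' (Phi_plus_mor B phi W x)"
    unfolding Phi_plus_mor_def tilde_res_def by (auto intro!: ext)
qed

lemma Phi_plus_mor_id:
  "mor_eq Os (Phi_plus B P) (Phi_plus_mor B id_mor) id_mor"
  unfolding mor_eq_def Phi_plus_fst Phi_plus_mor_def id_mor_def
proof (intro ballI ext)
  fix W s V assume "W \<in> Os" "s \<in> carrier (tilde_module B P W)"
  then show "(if V \<in> B \<and> V \<subseteq> W then s V else undefined) = s V"
    unfolding tilde_carrier_iff by auto
qed

lemma Phi_plus_mor_comp:
  "mor_eq Os (Phi_plus B P) (Phi_plus_mor B (comp_mor psi phi))
         (comp_mor (Phi_plus_mor B psi) (Phi_plus_mor B phi))"
  unfolding mor_eq_def Phi_plus_fst Phi_plus_mor_def comp_mor_def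
  by (auto intro!: ext)

lemma Phi_minus_presheaf:
  assumes F: "presheaf_on Fld Os F" and BO: "B \<subseteq> Os"
  shows "presheaf_on Fld B (Phi_minus B F)"
  using F BO unfolding presheaf_on_def Phi_minus_def by (auto simp: subset_iff)

lemma Phi_minus_mor_mor:
  assumes phi: "presheaf_mor Fld Os F G phi" and BO: "B \<subseteq> Os"
  shows "presheaf_mor Fld B (Phi_minus B F) (Phi_minus B G) (Phi_minus_mor B phi)"
  using phi BO unfolding presheaf_mor_def Phi_minus_def Phi_minus_mor_def by (auto simp: subset_iff)

lemma Phi_minus_mor_id: "mor_eq B (Phi_minus B F) (Phi_minus_mor B id_mor) id_mor"
  unfolding mor_eq_def Phi_minus_mor_def by auto

lemma Phi_minus_mor_comp: "mor_eq B (Phi_minus B F) (Phi_minus_mor B (comp_mor psi phi))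
         (comp_mor (Phi_minus_mor B psi) (Phi_minus_mor B phi))"
  unfolding mor_eq_def Phi_minus_mor_def comp_mor_def by auto

definition eta_map :: "'x set set \<Rightarrow> ('k,'a,'x) presheaf \<Rightarrow> 'x set \<Rightarrow> 'a \<Rightarrow> ('x set \<Rightarrow> 'a)" where
  "eta_map B P = (\<lambda>U x V. if V \<in> B \<and> V \<subseteq> U then snd P U V x else undefined)"

lemma eta_closed:
  assumes P: "presheaf_on Fld B P" and U: "U \<in> B" and x: "x \<in> carrier (fst P U)"
  shows "eta_map B P U x \<in> carrier (tilde_module B P U)"
  unfolding tilde_carrier_iff eta_map_def
  using U x lin_closed[OF ps_lin[OF P]] ps_comp[OF P] by auto

lemma eta_iso:
  assumes P: "presheaf_on Fld B P"
  shows "presheaf_iso Fld B P (Phi_minus B (Phi_plus B P)) (eta_map B P)"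
  unfolding presheaf_iso_def
proof (intro conjI exI)
  show "presheaf_mor Fld B P (Phi_minus B (Phi_plus B P)) (eta_map B P)"
    unfolding presheaf_mor_def
  proof (intro conjI ballI impI)
    fix U assume U: "U \<in> B"
    show "linear_map Fld (fst P U) (fst (Phi_minus B (Phi_plus B P)) U) (eta_map B P U)"
      unfolding Phi_minus_fst[OF U] Phi_plus_fst linear_map_def
    proof (intro conjI ballI)
      show "eta_map B P U \<in> carrier (fst P U) \<rightarrow> carrier (tilde_module B P U)"
        using eta_closed[OF P U] by blast
    next
      fix x y assume "x \<in> carrier (fst P U)" "y \<in> carrier (fst P U)"
      then show "eta_map B P U (add (fst P U) x y) = add (tilde_module B P U) (eta_map B P U x) (eta_map B P U y)"
        unfolding tilde_add eta_map_def using U by (auto intro!: ext lin_add[OF ps_lin[OF P]])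
    next
      fix a x assume "a \<in> carrier Fld" "x \<in> carrier (fst P U)"
      then show "eta_map B P U (smult (fst P U) a x) = smult (tilde_module B P U) a (eta_map B P U x)"
        unfolding tilde_smult eta_map_def using U by (auto intro!: ext lin_smult[OF ps_lin[OF P]])
    qed
  next
    fix U U' x assume H: "U \<in> B" "U' \<in> B" "U' \<subseteq> U" "x \<in> carrier (fst P U)"
    then have "\<And>V. V \<subseteq> U' \<Longrightarrow> V \<subseteq> U" by blast
    then show "eta_map B P U' (snd P U U' x) = snd (Phi_minus B (Phi_plus B P)) U U' (eta_map B P U x)"
      unfolding Phi_minus_snd[OF H(1,2)] Phi_plus_snd tilde_res_def eta_map_def
      using H ps_comp[OF P] by (auto intro!: ext)
  qed
  let ?psi = "\<lambda>U (s :: _ \<Rightarrow> _). s U"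
  show "presheaf_mor Fld B (Phi_minus B (Phi_plus B P)) P ?psi"
    unfolding presheaf_mor_def
  proof (intro conjI ballI impI)
    fix U assume U: "U \<in> B"
    show "linear_map Fld (fst (Phi_minus B (Phi_plus B P)) U) (fst P U) (?psi U)"
      unfolding Phi_minus_fst[OF U] Phi_plus_fst linear_map_def tilde_add tilde_smult
      using U by (auto simp: Pi_iff tilde_carrier_iff)
  next
    fix U U' x assume H: "U \<in> B" "U' \<in> B" "U' \<subseteq> U" "x \<in> carrier (fst (Phi_minus B (Phi_plus B P)) U)"
    then show "?psi U' (snd (Phi_minus B (Phi_plus B P)) U U' x) = snd P U U' (?psi U x)"
      unfolding Phi_minus_snd[OF H(1,2)] Phi_minus_fst[OF H(1)] Phi_plus_snd Phi_plus_fst tilde_res_def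
        tilde_carrier_iff by auto
  qed
  show "mor_eq B P (comp_mor ?psi (eta_map B P)) id_mor"
    unfolding mor_eq_def comp_mor_def id_mor_def eta_map_def using ps_id[OF P] by auto
  show "mor_eq B (Phi_minus B (Phi_plus B P)) (comp_mor (eta_map B P) ?psi) id_mor"
    unfolding mor_eq_def comp_mor_def id_mor_def eta_map_def
  proof (intro ballI)
    fix U s assume U: "U \<in> B" and s: "s \<in> carrier (fst (Phi_minus B (Phi_plus B P)) U)"
    then show "(\<lambda>V. if V \<in> B \<and> V \<subseteq> U then snd P U V (s U) else undefined) = s"
      unfolding Phi_minus_fst[OF U] Phi_plus_fst tilde_carrier_iff by (auto intro!: ext)
  qed
qed

lemma eta_nat:
  assumes P: "presheaf_on Fld B P" and Q: "presheaf_on Fld B Q" and phi: "presheaf_mor Fld B P Q phi"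
  shows "mor_eq B P (comp_mor (eta_map B Q) phi)
               (comp_mor (Phi_minus_mor B (Phi_plus_mor B phi)) (eta_map B P))"
  unfolding mor_eq_def comp_mor_def
proof (intro ballI)
  fix U x assume U: "U \<in> B" and x: "x \<in> carrier (fst P U)"
  show "eta_map B Q U (phi U x) = Phi_minus_mor B (Phi_plus_mor B phi) U (eta_map B P U x)"
    unfolding Phi_minus_mor_app[OF U] Phi_plus_mor_def eta_map_def
    using U x mor_nat[OF phi] by (auto intro!: ext)
qed



definition eps_map :: "'x set set \<Rightarrow> ('k,'b,'x) presheaf \<Rightarrow> 'x set \<Rightarrow> ('x set \<Rightarrow> 'b) \<Rightarrow> 'b" where
  "eps_map B F = (\<lambda>W s. SOME t. t \<in> carrier (fst F W) \<and> (\<forall>V\<in>B. V \<subseteq> W \<longrightarrow> snd F W V t = s V))"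

lemma opens_iff: "W \<in> opens T \<longleftrightarrow> openin T W" by (simp add: opens_def)

lemma sh_ps: "sheaf_on Fld T F \<Longrightarrow> presheaf_on Fld (opens T) F" by (simp add: sheaf_on_def)

lemma sheaf_local:
  assumes F: "sheaf_on Fld T F" and W: "openin T W" and o: "\<forall>U\<in>\<U>. openin T U" and c: "\<Union>\<U> = W"
    and s: "s \<in> carrier (fst F W)" and t: "t \<in> carrier (fst F W)"
    and eq: "\<forall>U\<in>\<U>. snd F W U s = snd F W U t"
  shows "s = t"
proof -
  have A: "\<forall>W \<U>. openin T W \<and> (\<forall>U\<in>\<U>. openin T U) \<and> \<Union>\<U> = W \<longrightarrow>
        (\<forall>s\<in>carrier (fst F W). \<forall>t\<in>carrier (fst F W).
            (\<forall>U\<in>\<U>. snd F W U s = snd F W U t) \<longrightarrow> s = t) \<and>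
        (\<forall>\<sigma>. (\<forall>U\<in>\<U>. \<sigma> U \<in> carrier (fst F U)) \<and>
              (\<forall>U\<in>\<U>. \<forall>U'\<in>\<U>. snd F U (U \<inter> U') (\<sigma> U) = snd F U' (U \<inter> U') (\<sigma> U')) \<longrightarrow>
              (\<exists>s\<in>carrier (fst F W). \<forall>U\<in>\<U>. snd F W U s = \<sigma> U))"
    using F unfolding sheaf_on_def by (rule conjunct2)
  have "(\<forall>s\<in>carrier (fst F W). \<forall>t\<in>carrier (fst F W).
            (\<forall>U\<in>\<U>. snd F W U s = snd F W U t) \<longrightarrow> s = t)"
    using mp[OF spec[OF spec[OF A, of W], of \<U>]] W o c by blast
  then show ?thesis using s t eq by blast
qed

lemma sheaf_glue:
  assumes F: "sheaf_on Fld T F" and W: "openin T W" and o: "\<forall>U\<in>\<U>. openin T U" and c: "\<Union>\<U> = W"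
    and sc: "\<forall>U\<in>\<U>. \<sigma> U \<in> carrier (fst F U)"
    and comp: "\<forall>U\<in>\<U>. \<forall>U'\<in>\<U>. snd F U (U \<inter> U') (\<sigma> U) = snd F U' (U \<inter> U') (\<sigma> U')"
  shows "\<exists>s\<in>carrier (fst F W). \<forall>U\<in>\<U>. snd F W U s = \<sigma> U"
proof -
  have A: "\<forall>W \<U>. openin T W \<and> (\<forall>U\<in>\<U>. openin T U) \<and> \<Union>\<U> = W \<longrightarrow>
        (\<forall>s\<in>carrier (fst F W). \<forall>t\<in>carrier (fst F W).
            (\<forall>U\<in>\<U>. snd F W U s = snd F W U t) \<longrightarrow> s = t) \<and>
        (\<forall>\<sigma>. (\<forall>U\<in>\<U>. \<sigma> U \<in> carrier (fst F U)) \<and>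
              (\<forall>U\<in>\<U>. \<forall>U'\<in>\<U>. snd F U (U \<inter> U') (\<sigma> U) = snd F U' (U \<inter> U') (\<sigma> U')) \<longrightarrow>
              (\<exists>s\<in>carrier (fst F W). \<forall>U\<in>\<U>. snd F W U s = \<sigma> U))"
    using F unfolding sheaf_on_def by (rule conjunct2)
  have "\<forall>\<sigma>. (\<forall>U\<in>\<U>. \<sigma> U \<in> carrier (fst F U)) \<and>
              (\<forall>U\<in>\<U>. \<forall>U'\<in>\<U>. snd F U (U \<inter> U') (\<sigma> U) = snd F U' (U \<inter> U') (\<sigma> U')) \<longrightarrow>
              (\<exists>s\<in>carrier (fst F W). \<forall>U\<in>\<U>. snd F W U s = \<sigma> U)"
    using mp[OF spec[OF spec[OF A, of W], of \<U>]] W o c by blast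
  then show ?thesis using sc comp by blast
qed

lemma sh_unique:
  assumes F: "sheaf_on Fld T F" and gb: "good_base B T" and W: "openin T W"
    and t1: "t1 \<in> carrier (fst F W)" and t2: "t2 \<in> carrier (fst F W)"
    and eq: "\<And>V. V \<in> B \<Longrightarrow> V \<subseteq> W \<Longrightarrow> snd F W V t1 = snd F W V t2"
  shows "t1 = t2"
proof -
  let ?U = "{V\<in>B. V \<subseteq> W}"
  have "(\<forall>U\<in>?U. openin T U) \<and> \<Union>?U = W" using gb_open[OF gb] gb_union[OF gb W] by auto
  then show ?thesis using sheaf_local[OF F W _ _ t1 t2] eq by blast
qed

lemma eps_exists:
  assumes F: "sheaf_on Fld T F" and gb: "good_base B T" and W: "openin T W"
    and s: "s \<in> carrier (tilde_module B (Phi_minus B F) W)"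
  shows "\<exists>t. t \<in> carrier (fst F W) \<and> (\<forall>V\<in>B. V \<subseteq> W \<longrightarrow> snd F W V t = s V)"
proof -
  have PF: "presheaf_on Fld (opens T) F" using F by (rule sh_ps)
  let ?U = "{V\<in>B. V \<subseteq> W}"
  have cov: "(\<forall>U\<in>?U. openin T U) \<and> \<Union>?U = W" using gb_open[OF gb] gb_union[OF gb W] by auto
  have sc: "s V \<in> carrier (fst F V)" if "V \<in> B" "V \<subseteq> W" for V
    using s that Phi_minus_fst[OF that(1)] unfolding tilde_carrier_iff by metis
  have scomp: "snd F V V' (s V) = s V'" if "V \<in> B" "V' \<in> B" "V' \<subseteq> V" "V \<subseteq> W" for V V'
    using s that Phi_minus_snd[OF that(1,2)] unfolding tilde_carrier_iff by metis
  have compat: "snd F V (V \<inter> V') (s V) = snd F V' (V \<inter> V') (s V')" if "V \<in> ?U" "V' \<in> ?U" for V V'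
  proof -
    have o: "openin T V" "openin T V'" "openin T (V \<inter> V')" using that gb_open[OF gb] by auto
    show ?thesis
    proof (rule sh_unique[OF F gb o(3)])
      show "snd F V (V \<inter> V') (s V) \<in> carrier (fst F (V \<inter> V'))"
        using lin_closed[OF ps_lin[OF PF]] o sc that by (simp add: opens_iff)
      show "snd F V' (V \<inter> V') (s V') \<in> carrier (fst F (V \<inter> V'))"
        using lin_closed[OF ps_lin[OF PF]] o sc that by (simp add: opens_iff)
      fix V'' assume V'': "V'' \<in> B" "V'' \<subseteq> V \<inter> V'"
      have o2: "openin T V''" using V'' gb_open[OF gb] by auto
      have "snd F (V \<inter> V') V'' (snd F V (V \<inter> V') (s V)) = snd F V V'' (s V)"
        using ps_comp[OF PF, of V "V \<inter> V'" V'' "s V"] o o2 V'' sc that by (auto simp: opens_iff)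
      also have "\<dots> = s V''" using scomp that V'' by auto
      also have "\<dots> = snd F V' V'' (s V')" using scomp that V'' by auto
      also have "\<dots> = snd F (V \<inter> V') V'' (snd F V' (V \<inter> V') (s V'))"
        using ps_comp[OF PF, of V' "V \<inter> V'" V'' "s V'"] o o2 V'' sc that by (auto simp: opens_iff)
      finally show "snd F (V \<inter> V') V'' (snd F V (V \<inter> V') (s V)) = snd F (V \<inter> V') V'' (snd F V' (V \<inter> V') (s V'))" .
    qed
  qed
  have "\<exists>t\<in>carrier (fst F W). \<forall>U\<in>?U. snd F W U t = s U"
    using sheaf_glue[OF F W, of ?U s] cov sc compat by blast
  then show ?thesis by auto
qed

lemma eps_spec:
  assumes F: "sheaf_on Fld T F" and gb: "good_base B T" and W: "openin T W"
    and s: "s \<in> carrier (tilde_module B (Phi_minus B F) W)"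
  shows "eps_map B F W s \<in> carrier (fst F W)" "\<And>V. V \<in> B \<Longrightarrow> V \<subseteq> W \<Longrightarrow> snd F W V (eps_map B F W s) = s V"
  using someI_ex[OF eps_exists[OF assms]] unfolding eps_map_def by auto

lemma eps_eq:
  assumes F: "sheaf_on Fld T F" and gb: "good_base B T" and W: "openin T W"
    and s: "s \<in> carrier (tilde_module B (Phi_minus B F) W)"
    and t: "t \<in> carrier (fst F W)" and r: "\<And>V. V \<in> B \<Longrightarrow> V \<subseteq> W \<Longrightarrow> snd F W V t = s V"
  shows "eps_map B F W s = t"
  using sh_unique[OF F gb W eps_spec(1)[OF F gb W s] t] eps_spec(2)[OF F gb W s] r by auto



lemma B_opens: "good_base B T \<Longrightarrow> B \<subseteq> opens T"
  using gb_open opens_iff by blast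

lemma eps_iso:
  assumes Fc: "cring Fld" and F: "sheaf_on Fld T F" and gb: "good_base B T"
  shows "presheaf_iso Fld (opens T) (Phi_plus B (Phi_minus B F)) F (eps_map B F)"
proof -
  have PF: "presheaf_on Fld (opens T) F" using F by (rule sh_ps)
  have PM: "presheaf_on Fld B (Phi_minus B F)" using Phi_minus_presheaf[OF PF B_opens[OF gb]] .
  have BO: "\<And>V. V \<in> B \<Longrightarrow> V \<in> opens T" using B_opens[OF gb] by blast
  let ?psi = "\<lambda>W t V. if V \<in> B \<and> V \<subseteq> W then snd F W V t else undefined"
  have psi_closed: "?psi W t \<in> carrier (tilde_module B (Phi_minus B F) W)"
    if W: "W \<in> opens T" and t: "t \<in> carrier (fst F W)" for W t
    unfolding tilde_carrier_iff
  proof (intro conjI ballI allI impI)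
    fix V assume V: "V \<in> B" "V \<subseteq> W"
    show "?psi W t V \<in> carrier (fst (Phi_minus B F) V)"
      using V lin_closed[OF ps_lin[OF PF W BO[OF V(1)] V(2)] t] Phi_minus_fst[OF V(1), where F=F] by simp
  next
    fix V V' assume V: "V \<in> B" "V' \<in> B" "V' \<subseteq> V \<and> V \<subseteq> W"
    show "snd (Phi_minus B F) V V' (?psi W t V) = ?psi W t V'"
    proof -
      have "V' \<subseteq> W" using V by blast
      then have "?psi W t V' = snd F W V' t" using V by simp
      also have "\<dots> = snd F V V' (snd F W V t)"
        using ps_comp[OF PF W BO[OF V(1)] BO[OF V(2)] _ _ t] V by simp
      finally show ?thesis using V Phi_minus_snd[OF V(1,2), where F=F] by simp
    qed
  qed auto
  show ?thesis
    unfolding presheaf_iso_def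
  proof (intro conjI exI)
    show "presheaf_mor Fld (opens T) (Phi_plus B (Phi_minus B F)) F (eps_map B F)"
      unfolding presheaf_mor_def Phi_plus_fst Phi_plus_snd
    proof (intro conjI ballI impI)
      fix W assume W: "W \<in> opens T"
      then have Wo: "openin T W" by (simp add: opens_iff)
      show "linear_map Fld (tilde_module B (Phi_minus B F) W) (fst F W) (eps_map B F W)"
        unfolding linear_map_def
      proof (intro conjI ballI)
        show "eps_map B F W \<in> carrier (tilde_module B (Phi_minus B F) W) \<rightarrow> carrier (fst F W)"
          using eps_spec(1)[OF F gb Wo] by blast
      next
        fix x y assume x: "x \<in> carrier (tilde_module B (Phi_minus B F) W)"
          and y: "y \<in> carrier (tilde_module B (Phi_minus B F) W)"
        have xy: "add (tilde_module B (Phi_minus B F) W) x y \<in> carrier (tilde_module B (Phi_minus B F) W)"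
          using module.axioms(2)[OF tilde_module_is_module[OF Fc PM]] x y
          by (meson abelian_group.axioms(1) abelian_monoid.a_closed)
        have ag: "abelian_group (fst F W)" using ps_ag[OF PF W] .
        have ex: "eps_map B F W x \<in> carrier (fst F W)" "eps_map B F W y \<in> carrier (fst F W)"
          using eps_spec(1)[OF F gb Wo] x y by auto
        show "eps_map B F W (add (tilde_module B (Phi_minus B F) W) x y) =
              add (fst F W) (eps_map B F W x) (eps_map B F W y)"
        proof (rule eps_eq[OF F gb Wo xy])
          show "add (fst F W) (eps_map B F W x) (eps_map B F W y) \<in> carrier (fst F W)"
            using ex ag by (meson abelian_group.axioms(1) abelian_monoid.a_closed)
          fix V assume V: "V \<in> B" "V \<subseteq> W"
          show "snd F W V (add (fst F W) (eps_map B F W x) (eps_map B F W y)) =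
                add (tilde_module B (Phi_minus B F) W) x y V"
            using lin_add[OF ps_lin[OF PF W BO[OF V(1)] V(2)] ex] eps_spec(2)[OF F gb Wo x V]
              eps_spec(2)[OF F gb Wo y V] V Phi_minus_fst[OF V(1), where F=F]
            unfolding tilde_add by simp
        qed
      next
        fix a x assume a: "a \<in> carrier Fld" and x: "x \<in> carrier (tilde_module B (Phi_minus B F) W)"
        have ax: "smult (tilde_module B (Phi_minus B F) W) a x \<in> carrier (tilde_module B (Phi_minus B F) W)"
          using module.smult_closed[OF tilde_module_is_module[OF Fc PM] a x] .
        have ex: "eps_map B F W x \<in> carrier (fst F W)"
          using eps_spec(1)[OF F gb Wo] x by auto
        show "eps_map B F W (smult (tilde_module B (Phi_minus B F) W) a x) =
              smult (fst F W) a (eps_map B F W x)"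
        proof (rule eps_eq[OF F gb Wo ax])
          show "smult (fst F W) a (eps_map B F W x) \<in> carrier (fst F W)"
            using module.smult_closed[OF ps_mod[OF PF W] a ex] .
          fix V assume V: "V \<in> B" "V \<subseteq> W"
          show "snd F W V (smult (fst F W) a (eps_map B F W x)) =
                smult (tilde_module B (Phi_minus B F) W) a x V"
            using lin_smult[OF ps_lin[OF PF W BO[OF V(1)] V(2)] a ex] eps_spec(2)[OF F gb Wo x V]
              V Phi_minus_fst[OF V(1), where F=F]
            unfolding tilde_smult by simp
        qed
      qed
    next
      fix W W' x assume W: "W \<in> opens T" and W': "W' \<in> opens T" and sub: "W' \<subseteq> W"
        and x: "x \<in> carrier (tilde_module B (Phi_minus B F) W)"
      then have Wo: "openin T W" and W'o: "openin T W'" by (auto simp: opens_iff)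
      have ex: "eps_map B F W x \<in> carrier (fst F W)" using eps_spec(1)[OF F gb Wo x] .
      show "eps_map B F W' (tilde_res B W W' x) = snd F W W' (eps_map B F W x)"
      proof (rule eps_eq[OF F gb W'o tilde_res_closed[OF x sub]])
        show "snd F W W' (eps_map B F W x) \<in> carrier (fst F W')"
          using lin_closed[OF ps_lin[OF PF W W' sub] ex] .
        fix V assume V: "V \<in> B" "V \<subseteq> W'"
        have "snd F W' V (snd F W W' (eps_map B F W x)) = snd F W V (eps_map B F W x)"
          using ps_comp[OF PF W W' BO[OF V(1)] V(2) sub ex] .
        also have "\<dots> = x V" using eps_spec(2)[OF F gb Wo x V(1)] V sub by auto
        finally show "snd F W' V (snd F W W' (eps_map B F W x)) = tilde_res B W W' x V"
          using V unfolding tilde_res_def by simp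
      qed
    qed
    show "presheaf_mor Fld (opens T) F (Phi_plus B (Phi_minus B F)) ?psi"
      unfolding presheaf_mor_def Phi_plus_fst Phi_plus_snd
    proof (intro conjI ballI impI)
      fix W assume W: "W \<in> opens T"
      show "linear_map Fld (fst F W) (tilde_module B (Phi_minus B F) W) (?psi W)"
        unfolding linear_map_def
      proof (intro conjI ballI)
        show "?psi W \<in> carrier (fst F W) \<rightarrow> carrier (tilde_module B (Phi_minus B F) W)"
          using psi_closed[OF W] by blast
      next
        fix x y assume x: "x \<in> carrier (fst F W)" and y: "y \<in> carrier (fst F W)"
        show "?psi W (add (fst F W) x y) = add (tilde_module B (Phi_minus B F) W) (?psi W x) (?psi W y)"
          unfolding tilde_add
        proof
          fix V show "?psi W (add (fst F W) x y) V =
            (if V \<in> B \<and> V \<subseteq> W then add (fst (Phi_minus B F) V) (?psi W x V) (?psi W y V) else undefined)"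
            using lin_add[OF ps_lin[OF PF W BO] x y] Phi_minus_fst[of V B F] by auto
        qed
      next
        fix a x assume a: "a \<in> carrier Fld" and x: "x \<in> carrier (fst F W)"
        show "?psi W (smult (fst F W) a x) = smult (tilde_module B (Phi_minus B F) W) a (?psi W x)"
          unfolding tilde_smult
        proof
          fix V show "?psi W (smult (fst F W) a x) V =
            (if V \<in> B \<and> V \<subseteq> W then smult (fst (Phi_minus B F) V) a (?psi W x V) else undefined)"
            using lin_smult[OF ps_lin[OF PF W BO] a x] Phi_minus_fst[of V B F] by auto
        qed
      qed
    next
      fix W W' x assume W: "W \<in> opens T" and W': "W' \<in> opens T" and sub: "W' \<subseteq> W"
        and x: "x \<in> carrier (fst F W)"
      show "?psi W' (snd F W W' x) = tilde_res B W W' (?psi W x)"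
      proof
        fix V show "?psi W' (snd F W W' x) V = tilde_res B W W' (?psi W x) V"
          using ps_comp[OF PF W W' BO _ sub x, of V] sub unfolding tilde_res_def by auto
      qed
    qed
    show "mor_eq (opens T) (Phi_plus B (Phi_minus B F)) (comp_mor ?psi (eps_map B F)) id_mor"
      unfolding mor_eq_def comp_mor_def id_mor_def Phi_plus_fst
    proof (intro ballI)
      fix W s assume W: "W \<in> opens T" and s: "s \<in> carrier (tilde_module B (Phi_minus B F) W)"
      then have Wo: "openin T W" by (simp add: opens_iff)
      show "?psi W (eps_map B F W s) = s"
      proof
        fix V show "?psi W (eps_map B F W s) V = s V"
          using eps_spec(2)[OF F gb Wo s, of V] s unfolding tilde_carrier_iff by auto
      qed
    qed
    show "mor_eq (opens T) F (comp_mor (eps_map B F) ?psi) id_mor"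
      unfolding mor_eq_def comp_mor_def id_mor_def
    proof (intro ballI)
      fix W t assume W: "W \<in> opens T" and t: "t \<in> carrier (fst F W)"
      then have Wo: "openin T W" by (simp add: opens_iff)
      show "eps_map B F W (?psi W t) = t"
        using eps_eq[OF F gb Wo psi_closed[OF W t] t] by auto
    qed
  qed
qed

lemma eps_nat:
  assumes Fc: "cring Fld" and F: "sheaf_on Fld T F" and G: "sheaf_on Fld T G" and gb: "good_base B T"
    and phi: "presheaf_mor Fld (opens T) F G phi"
  shows "mor_eq (opens T) (Phi_plus B (Phi_minus B F)) (comp_mor phi (eps_map B F))
               (comp_mor (eps_map B G) (Phi_plus_mor B (Phi_minus_mor B phi)))"
  unfolding mor_eq_def comp_mor_def Phi_plus_fst
proof (intro ballI)
  have PF: "presheaf_on Fld (opens T) F" using F by (rule sh_ps)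
  have PG: "presheaf_on Fld (opens T) G" using G by (rule sh_ps)
  have BO: "\<And>V. V \<in> B \<Longrightarrow> V \<in> opens T" using B_opens[OF gb] by blast
  fix W s assume W: "W \<in> opens T" and s: "s \<in> carrier (tilde_module B (Phi_minus B F) W)"
  then have Wo: "openin T W" by (simp add: opens_iff)
  have s': "Phi_plus_mor B (Phi_minus_mor B phi) W s \<in> carrier (tilde_module B (Phi_minus B G) W)"
    using Phi_plus_mor_closed[OF Phi_minus_presheaf[OF PF B_opens[OF gb]] Phi_minus_presheaf[OF PG B_opens[OF gb]]
      Phi_minus_mor_mor[OF phi B_opens[OF gb]] s] .
  have ex: "eps_map B F W s \<in> carrier (fst F W)" using eps_spec(1)[OF F gb Wo s] .
  have "eps_map B G W (Phi_plus_mor B (Phi_minus_mor B phi) W s) = phi W (eps_map B F W s)"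
  proof (rule eps_eq[OF G gb Wo s'])
    show "phi W (eps_map B F W s) \<in> carrier (fst G W)" using lin_closed[OF mor_lin[OF phi W] ex] .
    fix V assume V: "V \<in> B" "V \<subseteq> W"
    have "snd G W V (phi W (eps_map B F W s)) = phi V (snd F W V (eps_map B F W s))"
      using mor_nat[OF phi W BO[OF V(1)] V(2) ex] by (rule sym)
    also have "\<dots> = phi V (s V)" using eps_spec(2)[OF F gb Wo s V] by (rule arg_cong)
    also have "\<dots> = Phi_plus_mor B (Phi_minus_mor B phi) W s V"
      unfolding Phi_plus_mor_def Phi_minus_mor_def using V by simp
    finally show "snd G W V (phi W (eps_map B F W s)) = Phi_plus_mor B (Phi_minus_mor B phi) W s V" .
  qed
  then show "phi W (eps_map B F W s) = eps_map B G W (Phi_plus_mor B (Phi_minus_mor B phi) W s)" by (rule sym)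
qed



lemma open_simplex_supp:
  assumes h: "f \<in> open_simplex A" shows "A = {v. f v \<noteq> 0}"
proof -
  have a: "\<forall>v\<in>A. 0 < f v" and b: "\<forall>v. v \<notin> A \<longrightarrow> f v = 0" using h by (auto simp: open_simplex_def)
  have "v \<in> A \<longleftrightarrow> f v \<noteq> 0" for v using a b by (cases "v \<in> A") auto
  then show ?thesis by blast
qed

lemma open_simplex_disj: "f \<in> open_simplex A \<Longrightarrow> f \<in> open_simplex A' \<Longrightarrow> A = A'"
  using open_simplex_supp by blast

lemma perv_ge_refl: "perv_ge C d S S" by (simp add: perv_ge_def)
lemma perv_ge_trans: "perv_ge C d S1 S2 \<Longrightarrow> perv_ge C d S2 S3 \<Longrightarrow> perv_ge C d S1 S3"
  unfolding perv_ge_def by simp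

lemma mem_perv_star: "x \<in> perv_star C d S \<longleftrightarrow> (\<exists>S'. S' \<in> C \<and> perv_ge C d S S' \<and> x \<in> open_simplex S')"
  unfolding perv_star_def by blast

lemma self_in_star: "S' \<in> C \<Longrightarrow> x \<in> open_simplex S' \<Longrightarrow> x \<in> perv_star C d S'"
  using mem_perv_star perv_ge_refl by blast

lemma star_min:
  assumes "S' \<in> C" "x \<in> open_simplex S'" "x \<in> perv_star C d S"
  shows "perv_star C d S' \<subseteq> perv_star C d S"
proof -
  obtain S'' where "S'' \<in> C" "perv_ge C d S S''" "x \<in> open_simplex S''" using assms(3) mem_perv_star by metis
  then have "perv_ge C d S S'" using open_simplex_disj assms(2) by metis
  then show ?thesis using perv_ge_trans unfolding subset_iff mem_perv_star by blast
qed

lemma point_exists: "finite S \<Longrightarrow> S \<noteq> {} \<Longrightarrow> \<exists>f. f \<in> open_simplex S"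
proof -
  assume fS: "finite S" and ne: "S \<noteq> {}"
  let ?f = "\<lambda>v. if v \<in> S then 1 / real (card S) else 0"
  have c: "card S > 0" using fS ne card_gt_0_iff by blast
  have "sum ?f S = 1" using c by simp
  then have "?f \<in> open_simplex S" unfolding open_simplex_def using c by auto
  then show ?thesis by blast
qed

lemma basic_refine:
  assumes "V \<in> perv_base C d" "x \<in> V"
  shows "\<exists>V'\<in>perv_base C d. x \<in> V' \<and> (\<forall>V2\<in>perv_base C d. x \<in> V2 \<longrightarrow> V' \<subseteq> V2)"
proof -
  obtain S where S: "S \<in> C" "V = perv_star C d S" using assms(1) unfolding perv_base_def by blast
  obtain S' where S': "S' \<in> C" "x \<in> open_simplex S'" using assms(2) S mem_perv_star by metis
  show ?thesis
  proof (intro bexI conjI ballI impI)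
    show "perv_star C d S' \<in> perv_base C d" using S' unfolding perv_base_def by blast
    show "x \<in> perv_star C d S'" using self_in_star S' by metis
    fix V2 assume "V2 \<in> perv_base C d" "x \<in> V2"
    then obtain S2 where "S2 \<in> C" "V2 = perv_star C d S2" "x \<in> perv_star C d S2" unfolding perv_base_def by blast
    then show "perv_star C d S' \<subseteq> V2" using star_min S' by metis
  qed
qed

lemma istop: "istopology (\<lambda>W. \<exists>F \<subseteq> perv_base C d. W = \<Union>F)"
  unfolding istopology_def
proof (intro conjI allI impI ballI)
  let ?B = "perv_base C d"
  fix S T assume "\<exists>F\<subseteq>?B. S = \<Union>F" "\<exists>F\<subseteq>?B. T = \<Union>F"
  then obtain F1 F2 where F: "F1 \<subseteq> ?B" "S = \<Union>F1" "F2 \<subseteq> ?B" "T = \<Union>F2" by blast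
  have "S \<inter> T = \<Union>{V\<in>?B. V \<subseteq> S \<inter> T}"
  proof
    show "S \<inter> T \<subseteq> \<Union>{V\<in>?B. V \<subseteq> S \<inter> T}"
    proof
      fix x assume "x \<in> S \<inter> T"
      then obtain V1 V2 where V: "V1 \<in> F1" "x \<in> V1" "V2 \<in> F2" "x \<in> V2" using F by blast
      then obtain V' where V': "V' \<in> ?B" "x \<in> V'" "\<forall>V2\<in>?B. x \<in> V2 \<longrightarrow> V' \<subseteq> V2"
        using basic_refine F(1) by blast
      then have "V' \<subseteq> V1" "V' \<subseteq> V2" using V F by auto
      then have "V' \<subseteq> S \<inter> T" using V F by blast
      then show "x \<in> \<Union>{V\<in>?B. V \<subseteq> S \<inter> T}" using V' by blast
    qed
  qed blast
  then show "\<exists>F\<subseteq>?B. S \<inter> T = \<Union>F" by (intro exI[of _ "{V\<in>?B. V \<subseteq> S \<inter> T}"]) auto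
next
  let ?B = "perv_base C d"
  fix K assume K: "\<forall>W\<in>K. \<exists>F\<subseteq>?B. W = \<Union>F"
  have "\<Union>K = \<Union>{V\<in>?B. V \<subseteq> \<Union>K}"
  proof
    show "\<Union>K \<subseteq> \<Union>{V\<in>?B. V \<subseteq> \<Union>K}"
    proof
      fix x assume "x \<in> \<Union>K"
      then obtain W where W: "W \<in> K" "x \<in> W" by blast
      then obtain F where "F \<subseteq> ?B" "W = \<Union>F" using K by blast
      then obtain V where "V \<in> ?B" "x \<in> V" "V \<subseteq> W" using W by blast
      then show "x \<in> \<Union>{V\<in>?B. V \<subseteq> \<Union>K}" using W by blast
    qed
  qed blast
  then show "\<exists>F\<subseteq>?B. \<Union>K = \<Union>F" by (intro exI[of _ "{V\<in>?B. V \<subseteq> \<Union>K}"]) auto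
qed

lemma openin_perv: "openin (perv_topology C d) W \<longleftrightarrow> (\<exists>F \<subseteq> perv_base C d. W = \<Union>F)"
  unfolding perv_topology_def topology_inverse'[OF istop] by (rule refl)

lemma perv_good_base:
  assumes SC: "simplicial_complex C"
  shows "good_base (perv_base C d) (perv_topology C d)"
  unfolding good_base_def
proof (intro conjI allI ballI impI)
  fix W show "openin (perv_topology C d) W = (\<exists>F\<subseteq>perv_base C d. W = \<Union>F)" by (rule openin_perv)
next
  fix V \<U> assume V: "V \<in> perv_base C d" and H: "(\<forall>U\<in>\<U>. openin (perv_topology C d) U) \<and> V \<subseteq> \<Union>\<U>"
  obtain S where S: "S \<in> C" "V = perv_star C d S" using V unfolding perv_base_def by blast
  have "finite S" "S \<noteq> {}" using SC S(1) unfolding simplicial_complex_def by auto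
  then obtain x where x: "x \<in> open_simplex S" using point_exists by blast
  have xV: "x \<in> V" using self_in_star[OF S(1) x] S(2) by simp
  then obtain U where U: "U \<in> \<U>" "x \<in> U" using H by blast
  then obtain F where F: "F \<subseteq> perv_base C d" "U = \<Union>F" using H openin_perv by metis
  then obtain V2 where V2: "V2 \<in> F" "x \<in> V2" using U by blast
  then obtain S2 where "S2 \<in> C" "V2 = perv_star C d S2" using F unfolding perv_base_def by blast
  then have "V \<subseteq> V2" using star_min[OF S(1) x] V2 S(2) by blast
  then show "\<exists>U\<in>\<U>. V \<subseteq> U" using U V2 F by blast
qed


theorem lemma2p3p5:
  fixes C :: "'v set set" and d :: "nat \<Rightarrow> int" and Fld :: "'k ring"
  assumes "simplicial_complex C" and "connected (realization C)"
    and "cellular_perversity d" and "field Fld"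
  defines "B \<equiv> perv_base C d" and "T \<equiv> perv_topology C d"
  shows
  \<comment> \<open>Phi+ is a functor Pre B(X,d) to SH(T(X,d))\<close>
  "(\<forall>P :: ('k,'a,'v \<Rightarrow> real) presheaf. presheaf_on Fld B P \<longrightarrow> sheaf_on Fld T (Phi_plus B P)) \<and>
   (\<forall>(P :: ('k,'a,'v \<Rightarrow> real) presheaf) Q phi. presheaf_on Fld B P \<and> presheaf_on Fld B Q \<and>
       presheaf_mor Fld B P Q phi \<longrightarrow>
       presheaf_mor Fld (opens T) (Phi_plus B P) (Phi_plus B Q) (Phi_plus_mor B phi)) \<and>
   (\<forall>P :: ('k,'a,'v \<Rightarrow> real) presheaf. presheaf_on Fld B P \<longrightarrow>
       mor_eq (opens T) (Phi_plus B P) (Phi_plus_mor B id_mor) id_mor) \<and>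
   (\<forall>(P :: ('k,'a,'v \<Rightarrow> real) presheaf) Q R phi psi.
       presheaf_on Fld B P \<and> presheaf_on Fld B Q \<and> presheaf_on Fld B R \<and>
       presheaf_mor Fld B P Q phi \<and> presheaf_mor Fld B Q R psi \<longrightarrow>
       mor_eq (opens T) (Phi_plus B P) (Phi_plus_mor B (comp_mor psi phi))
         (comp_mor (Phi_plus_mor B psi) (Phi_plus_mor B phi))) \<and>
  \<comment> \<open>Phi- is a functor SH(T(X,d)) to Pre B(X,d)\<close>
   (\<forall>F :: ('k,'b,'v \<Rightarrow> real) presheaf. sheaf_on Fld T F \<longrightarrow> presheaf_on Fld B (Phi_minus B F)) \<and>
   (\<forall>(F :: ('k,'b,'v \<Rightarrow> real) presheaf) G phi. sheaf_on Fld T F \<and> sheaf_on Fld T G \<and>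
       presheaf_mor Fld (opens T) F G phi \<longrightarrow>
       presheaf_mor Fld B (Phi_minus B F) (Phi_minus B G) (Phi_minus_mor B phi)) \<and>
   (\<forall>F :: ('k,'b,'v \<Rightarrow> real) presheaf. sheaf_on Fld T F \<longrightarrow>
       mor_eq B (Phi_minus B F) (Phi_minus_mor B id_mor) id_mor) \<and>
   (\<forall>(F :: ('k,'b,'v \<Rightarrow> real) presheaf) G H phi psi.
       sheaf_on Fld T F \<and> sheaf_on Fld T G \<and> sheaf_on Fld T H \<and>
       presheaf_mor Fld (opens T) F G phi \<and> presheaf_mor Fld (opens T) G H psi \<longrightarrow>
       mor_eq B (Phi_minus B F) (Phi_minus_mor B (comp_mor psi phi))
         (comp_mor (Phi_minus_mor B psi) (Phi_minus_mor B phi))) \<and>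
  \<comment> \<open>natural isomorphism Id = Phi- Phi+ on Pre B(X,d)\<close>
   (\<exists>eta. (\<forall>P :: ('k,'a,'v \<Rightarrow> real) presheaf. presheaf_on Fld B P \<longrightarrow>
             presheaf_iso Fld B P (Phi_minus B (Phi_plus B P)) (eta P)) \<and>
          (\<forall>(P :: ('k,'a,'v \<Rightarrow> real) presheaf) Q phi.
             presheaf_on Fld B P \<and> presheaf_on Fld B Q \<and> presheaf_mor Fld B P Q phi \<longrightarrow>
             mor_eq B P (comp_mor (eta Q) phi)
               (comp_mor (Phi_minus_mor B (Phi_plus_mor B phi)) (eta P)))) \<and>
  \<comment> \<open>natural isomorphism Phi+ Phi- = Id on SH(T(X,d))\<close>
   (\<exists>eps. (\<forall>F :: ('k,'b,'v \<Rightarrow> real) presheaf. sheaf_on Fld T F \<longrightarrow>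
             presheaf_iso Fld (opens T) (Phi_plus B (Phi_minus B F)) F (eps F)) \<and>
          (\<forall>(F :: ('k,'b,'v \<Rightarrow> real) presheaf) G phi.
             sheaf_on Fld T F \<and> sheaf_on Fld T G \<and> presheaf_mor Fld (opens T) F G phi \<longrightarrow>
             mor_eq (opens T) (Phi_plus B (Phi_minus B F)) (comp_mor phi (eps F))
               (comp_mor (eps G) (Phi_plus_mor B (Phi_minus_mor B phi)))))"
proof -
  have Fc: "cring Fld" using assms(4) field.axioms(1) domain.axioms(1) by blast
  have gb: "good_base B T" unfolding B_def T_def by (rule perv_good_base[OF assms(1)])
  have BO: "B \<subseteq> opens T" by (rule B_opens[OF gb])
  show ?thesis
  proof (intro conjI allI impI)
    show "\<exists>eta. (\<forall>P :: ('k,'a,'v \<Rightarrow> real) presheaf. presheaf_on Fld B P \<longrightarrow>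
             presheaf_iso Fld B P (Phi_minus B (Phi_plus B P)) (eta P)) \<and>
          (\<forall>(P :: ('k,'a,'v \<Rightarrow> real) presheaf) Q phi.
             presheaf_on Fld B P \<and> presheaf_on Fld B Q \<and> presheaf_mor Fld B P Q phi \<longrightarrow>
             mor_eq B P (comp_mor (eta Q) phi)
               (comp_mor (Phi_minus_mor B (Phi_plus_mor B phi)) (eta P)))"
      apply (rule exI[of _ "eta_map B"])
      apply (intro conjI allI impI)
       apply (erule eta_iso)
      apply (elim conjE)
      apply (erule (2) eta_nat)
      done
    show "\<exists>eps. (\<forall>F :: ('k,'b,'v \<Rightarrow> real) presheaf. sheaf_on Fld T F \<longrightarrow>
             presheaf_iso Fld (opens T) (Phi_plus B (Phi_minus B F)) F (eps F)) \<and>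
          (\<forall>(F :: ('k,'b,'v \<Rightarrow> real) presheaf) G phi.
             sheaf_on Fld T F \<and> sheaf_on Fld T G \<and> presheaf_mor Fld (opens T) F G phi \<longrightarrow>
             mor_eq (opens T) (Phi_plus B (Phi_minus B F)) (comp_mor phi (eps F))
               (comp_mor (eps G) (Phi_plus_mor B (Phi_minus_mor B phi))))"
      apply (rule exI[of _ "eps_map B"])
      apply (intro conjI allI impI)
       apply (erule eps_iso[OF Fc _ gb])
      apply (elim conjE)
      apply (rule eps_nat[OF Fc _ _ gb]; assumption)
      done
  next
    fix P :: "('k,'a,'v \<Rightarrow> real) presheaf" assume "presheaf_on Fld B P"
    then show "sheaf_on Fld T (Phi_plus B P)" by (rule Phi_plus_sheaf[OF Fc _ gb])
  next
    fix P :: "('k,'a,'v \<Rightarrow> real) presheaf" and Q phi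
    assume "presheaf_on Fld B P \<and> presheaf_on Fld B Q \<and> presheaf_mor Fld B P Q phi"
    then show "presheaf_mor Fld (opens T) (Phi_plus B P) (Phi_plus B Q) (Phi_plus_mor B phi)"
      by (elim conjE) (rule Phi_plus_mor_mor)
  next
    fix P :: "('k,'a,'v \<Rightarrow> real) presheaf"
    show "mor_eq (opens T) (Phi_plus B P) (Phi_plus_mor B id_mor) id_mor" by (rule Phi_plus_mor_id)
  next
    fix P :: "('k,'a,'v \<Rightarrow> real) presheaf" and Q R phi psi
    show "mor_eq (opens T) (Phi_plus B P) (Phi_plus_mor B (comp_mor psi phi))
         (comp_mor (Phi_plus_mor B psi) (Phi_plus_mor B phi))" by (rule Phi_plus_mor_comp)
  next
    fix F :: "('k,'b,'v \<Rightarrow> real) presheaf" assume "sheaf_on Fld T F"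
    then show "presheaf_on Fld B (Phi_minus B F)" by (rule Phi_minus_presheaf[OF sh_ps BO])
  next
    fix F :: "('k,'b,'v \<Rightarrow> real) presheaf" and G phi
    assume "sheaf_on Fld T F \<and> sheaf_on Fld T G \<and> presheaf_mor Fld (opens T) F G phi"
    then show "presheaf_mor Fld B (Phi_minus B F) (Phi_minus B G) (Phi_minus_mor B phi)"
      by (elim conjE) (rule Phi_minus_mor_mor[OF _ BO])
  next
    fix F :: "('k,'b,'v \<Rightarrow> real) presheaf"
    show "mor_eq B (Phi_minus B F) (Phi_minus_mor B id_mor) id_mor" by (rule Phi_minus_mor_id)
  next
    fix F :: "('k,'b,'v \<Rightarrow> real) presheaf" and G H phi psi
    show "mor_eq B (Phi_minus B F) (Phi_minus_mor B (comp_mor psi phi))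
         (comp_mor (Phi_minus_mor B psi) (Phi_minus_mor B phi))" by (rule Phi_minus_mor_comp)
  qed
qed

end
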